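(* In the Byblos protocol described in the context, at all times, if $P=\mathit{pending}[t]$ is a non-empty pending set calculated by a correct server, then $\bigcup_{t'<t}\mathit{confirmed}[t']\subseteq P$, where $\mathit{confirmed}[t']$ is the confirmed set of any correct server.
   Context: Byblos protocol. There are $n=4f+1$ servers, at most $f$ of which are Byzantine; the rest are correct. Clients are not Byzantine (they may crash). Messages between correct parties are eventually delivered, channels are FIFO, senders are authenticated, and client messages are signed and unforgeable. Each correct server keeps an integer $\mathit{clock}$ (initially $0$), sets $\mathit{proposed}[s]$ of pairs $(T,k)$ for each server $s$, maps $\mathit{confirmed}[t]$ and $\mathit{pending}[t]$ from timestamps to sets of transactions (initially empty), and sets $\mathit{ConfirmWitness}[T]$ of servers. Client with transaction $T$: broadcasts $\mathrm{Propose}(T)$; waits for $\mathrm{ProposeAck}(T,\cdot)$ from at least $n-f$ servers; letting $\mathit{timestamp}[s]$ be the value from server $s$ ($0$ if none), sets $\hat t$ to $1$ plus the $(f+1)$-st largest value; broadcasts $\mathrm{Confirm}(T,\hat t)$. Correct server: on $\mathrm{Propose}(T)$ from a client, adds $(T,\mathit{clock})$ to $\mathit{proposed}[\mathit{self}]$, sends $\mathrm{Proposed}(T,\mathit{clock})$ to all servers and $\mathrm{ProposeAck}(T,\mathit{clock})$ to the client; on $\mathrm{Proposed}(T,k)$ from server $s$, adds $(T,k)$ to $\mathit{proposed}[s]$; on $\mathrm{Confirm}(T,\hat t)$ from a client or server $s$: sets $\mathit{clock}:=\max(\mathit{clock},\hat t)$, adds $T$ to $\mathit{confirmed}[\hat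 t]$, forwards $\mathrm{Confirm}(T,\hat t)$ to all servers if not previously sent, adds $s$ to $\mathit{ConfirmWitness}[T]$, and if $\mathit{pending}[\hat t]=\emptyset$ and $|\mathit{ConfirmWitness}[T]|=n-f$, sets $\mathit{pending}[\hat t]$ to the set of all $T'$ such that $(T',k)\in\mathit{proposed}[s']$ for some $s'\in\mathit{ConfirmWitness}[T]$ and some $k\le\hat t$. *)

theory Defs
  imports Main "HOL-Library.Multiset" "HOL-Library.Cardinality"
begin

datatype ('s, 't) party = Srv 's | Cli 't
  (* servers of type 's; each transaction T is issued by its own client Cli T *)

datatype 't msg =
    Propose 't | ProposeAck 't int | Proposed 't int | Confirm 't int

datatype cphase = Idle | Waiting | Done

record ('s, 't) gstate =
  clock     :: "'s \<Rightarrow> int"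
  proposed  :: "'s \<Rightarrow> 's \<Rightarrow> ('t \<times> int) set"   (* proposed at server p of server s *)
  confirmed :: "'s \<Rightarrow> int \<Rightarrow> 't set"
  pending   :: "'s \<Rightarrow> int \<Rightarrow> 't set"
  cwit      :: "'s \<Rightarrow> 't \<Rightarrow> 's set"
  fwd       :: "'s \<Rightarrow> ('t \<times> int) set"        (* Confirm messages already forwarded *)
  chan      :: "('s, 't) party \<Rightarrow> ('s, 't) party \<Rightarrow> 't msg list"  (* FIFO channel sender -> receiver *)
  phase     :: "'t \<Rightarrow> cphase"
  acks      :: "'t \<Rightarrow> 's \<Rightarrow> int option"       (* timestamps received by client of T *)
  signed    :: "('t \<times> int) set"               (* Confirm(T,t) messages signed by clients *)

definition init_state :: "('s, 't) gstate" where
  "init_state = \<lparr> clock = (\<lambda>_. 0), proposed = (\<lambda>_ _. {}), confirmed = (\<lambda>_ _. {}),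
     pending = (\<lambda>_ _. {}), cwit = (\<lambda>_ _. {}), fwd = (\<lambda>_. {}), chan = (\<lambda>_ _. []),
     phase = (\<lambda>_. Idle), acks = (\<lambda>_ _. None), signed = {} \<rparr>"

definition is_srv :: "('s, 't) party \<Rightarrow> bool" where
  "is_srv p = (\<exists>s. p = Srv s)"

definition send :: "(('s, 't) party \<Rightarrow> ('s, 't) party \<Rightarrow> 't msg list)
   \<Rightarrow> ('s, 't) party \<Rightarrow> ('s, 't) party \<Rightarrow> 't msg \<Rightarrow> (('s, 't) party \<Rightarrow> ('s, 't) party \<Rightarrow> 't msg list)" where
  "send ch p q m = ch(p := (ch p)(q := ch p q @ [m]))"

definition bcast :: "(('s, 't) party \<Rightarrow> ('s, 't) party \<Rightarrow> 't msg list)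
   \<Rightarrow> ('s, 't) party \<Rightarrow> 't msg \<Rightarrow> (('s, 't) party \<Rightarrow> ('s, 't) party \<Rightarrow> 't msg list)" where
  "bcast ch p m = (\<lambda>a b. if a = p \<and> is_srv b then ch a b @ [m] else ch a b)"

definition pop :: "(('s, 't) party \<Rightarrow> ('s, 't) party \<Rightarrow> 't msg list)
   \<Rightarrow> ('s, 't) party \<Rightarrow> ('s, 't) party \<Rightarrow> (('s, 't) party \<Rightarrow> ('s, 't) party \<Rightarrow> 't msg list)" where
  "pop ch p q = ch(p := (ch p)(q := tl (ch p q)))"

(* the (f+1)-st largest value of ts over all servers *)
definition kth_largest :: "nat \<Rightarrow> ('s::finite \<Rightarrow> int) \<Rightarrow> int" where
  "kth_largest f ts = rev (sorted_list_of_multiset (image_mset ts (mset_set UNIV))) ! f"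

definition client_ts :: "nat \<Rightarrow> ('s::finite \<Rightarrow> int option) \<Rightarrow> int" where
  "client_ts f a = 1 + kth_largest f (\<lambda>s. case a s of None \<Rightarrow> 0 | Some k \<Rightarrow> k)"

fun handle :: "nat \<Rightarrow> 's::finite \<Rightarrow> ('s, 't) party \<Rightarrow> 't msg \<Rightarrow> ('s, 't) gstate \<Rightarrow> ('s, 't) gstate" where
  "handle f s (Cli c) (Propose T) \<sigma> =
     \<sigma>\<lparr> proposed := (proposed \<sigma>)(s := (proposed \<sigma> s)(s := insert (T, clock \<sigma> s) (proposed \<sigma> s s))),
        chan := send (bcast (chan \<sigma>) (Srv s) (Proposed T (clock \<sigma> s))) (Srv s) (Cli c)
                     (ProposeAck T (clock \<sigma> s)) \<rparr>"
| "handle f s (Srv q) (Proposed T k) \<sigma> =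
     \<sigma>\<lparr> proposed := (proposed \<sigma>)(s := (proposed \<sigma> s)(q := insert (T, k) (proposed \<sigma> s q))) \<rparr>"
| "handle f s p (Confirm T t) \<sigma> =
     (let W = (case p of Srv q \<Rightarrow> insert q (cwit \<sigma> s T) | Cli _ \<Rightarrow> cwit \<sigma> s T);
          new = ((T, t) \<notin> fwd \<sigma> s)
      in \<sigma>\<lparr> clock := (clock \<sigma>)(s := max (clock \<sigma> s) t),
            confirmed := (confirmed \<sigma>)(s := (confirmed \<sigma> s)(t := insert T (confirmed \<sigma> s t))),
            chan := (if new then bcast (chan \<sigma>) (Srv s) (Confirm T t) else chan \<sigma>),
            fwd := (if new then (fwd \<sigma>)(s := insert (T, t) (fwd \<sigma> s)) else fwd \<sigma>),
            cwit := (cwit \<sigma>)(s := (cwit \<sigma> s)(T := W)),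
            pending := (if pending \<sigma> s t = {} \<and> card W = card (UNIV :: 's set) - f
                        then (pending \<sigma>)(s := (pending \<sigma> s)(t :=
                               {T'. \<exists>q\<in>W. \<exists>k. k \<le> t \<and> (T', k) \<in> proposed \<sigma> s q}))
                        else pending \<sigma>) \<rparr>)"
| "handle f s p m \<sigma> = \<sigma>"

fun cli_handle :: "'t \<Rightarrow> 's \<Rightarrow> 't msg \<Rightarrow> ('s, 't) gstate \<Rightarrow> ('s, 't) gstate" where
  "cli_handle c s (ProposeAck T k) \<sigma> =
     (if T = c \<and> phase \<sigma> c = Waiting \<and> acks \<sigma> c s = None
      then \<sigma>\<lparr> acks := (acks \<sigma>)(c := (acks \<sigma> c)(s := Some k)) \<rparr> else \<sigma>)"
| "cli_handle c s m \<sigma> = \<sigma>"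

(* reachable global states, with Byzantine server set B; n = CARD('s) *)
inductive reach :: "nat \<Rightarrow> 's::finite set \<Rightarrow> ('s, 't) gstate \<Rightarrow> bool" for f B where
  init: "reach f B init_state"
| cli_propose: "reach f B \<sigma> \<Longrightarrow> phase \<sigma> c = Idle \<Longrightarrow>
     reach f B (\<sigma>\<lparr> phase := (phase \<sigma>)(c := Waiting), chan := bcast (chan \<sigma>) (Cli c) (Propose c) \<rparr>)"
| cli_recv: "reach f B \<sigma> \<Longrightarrow> chan \<sigma> (Srv s) (Cli c) = m # ms \<Longrightarrow>
     reach f B (cli_handle c s m (\<sigma>\<lparr> chan := pop (chan \<sigma>) (Srv s) (Cli c) \<rparr>))"
| cli_confirm: "reach f B \<sigma> \<Longrightarrow> phase \<sigma> c = Waiting \<Longrightarrow>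
     card {s. acks \<sigma> c s \<noteq> None} \<ge> card (UNIV :: 's set) - f \<Longrightarrow>
     reach f B (\<sigma>\<lparr> phase := (phase \<sigma>)(c := Done),
                    signed := insert (c, client_ts f (acks \<sigma> c)) (signed \<sigma>),
                    chan := bcast (chan \<sigma>) (Cli c) (Confirm c (client_ts f (acks \<sigma> c))) \<rparr>)"
| srv_recv: "reach f B \<sigma> \<Longrightarrow> s \<notin> B \<Longrightarrow> chan \<sigma> p (Srv s) = m # ms \<Longrightarrow>
     reach f B (handle f s p m (\<sigma>\<lparr> chan := pop (chan \<sigma>) p (Srv s) \<rparr>))"
| byz_send: "reach f B \<sigma> \<Longrightarrow> b \<in> B \<Longrightarrow> (\<forall>T t. m = Confirm T t \<longrightarrow> (T, t) \<in> signed \<sigma>) \<Longrightarrow>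
     reach f B (\<sigma>\<lparr> chan := send (chan \<sigma>) (Srv b) x m \<rparr>)"

end

theory Submission
  imports Defs
begin

lemma chan_pop[simp]: "pop ch p q a b = (if a = p \<and> b = q then tl (ch p q) else ch a b)"
  by (simp add: pop_def)
lemma chan_send[simp]: "send ch p q m a b = (if a = p \<and> b = q then ch p q @ [m] else ch a b)"
  by (simp add: send_def)
lemma chan_bcast[simp]: "bcast ch p m a b = (if a = p \<and> is_srv b then ch a b @ [m] else ch a b)"
  by (simp add: bcast_def)

lemma cli_handle_simps[simp]:
  "chan (cli_handle c s m \<sigma>) = chan \<sigma>"
  "signed (cli_handle c s m \<sigma>) = signed \<sigma>"
  "proposed (cli_handle c s m \<sigma>) = proposed \<sigma>"
  "clock (cli_handle c s m \<sigma>) = clock \<sigma>"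
  "confirmed (cli_handle c s m \<sigma>) = confirmed \<sigma>"
  "pending (cli_handle c s m \<sigma>) = pending \<sigma>"
  "cwit (cli_handle c s m \<sigma>) = cwit \<sigma>"
  "fwd (cli_handle c s m \<sigma>) = fwd \<sigma>"
  "phase (cli_handle c s m \<sigma>) = phase \<sigma>"
  by (cases m; simp)+

lemma handle_simps[simp]:
  "signed (handle f s p m \<sigma>) = signed \<sigma>"
  "phase (handle f s p m \<sigma>) = phase \<sigma>"
  "acks (handle f s p m \<sigma>) = acks \<sigma>"
  by (cases p; cases m; simp add: Let_def)+

lemma handle_proposed_mono: "proposed \<sigma> a b \<subseteq> proposed (handle f s p m \<sigma>) a b"
  by (cases p; cases m; auto simp add: Let_def)

lemma handle_clock_mono: "clock \<sigma> a \<le> clock (handle f s p m \<sigma>) a"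
  by (cases p; cases m; auto simp add: Let_def)

lemma set_tl_sub: "x \<in> set (tl xs) \<Longrightarrow> x \<in> set xs"
  by (cases xs) auto

lemma inv_S1:
  fixes \<sigma> :: "('s::finite,'t) gstate"
  assumes "reach f B \<sigma>"
  shows "\<forall>p r c x. Confirm c x \<in> set (chan \<sigma> p r) \<longrightarrow> (c,x) \<in> signed \<sigma>"
  using assms
proof (induction rule: reach.induct)
  case init
  then show ?case by (simp add: init_state_def)
next
  case (cli_propose \<sigma> c)
  then show ?case by auto
next
  case (cli_recv \<sigma> s c m ms)
  then show ?case by auto (metis list.set_intros(2))
next
  case (cli_confirm \<sigma> c)
  then show ?case by auto
next
  case (srv_recv \<sigma> s p m ms)
  have "\<forall>c x. Confirm c x \<in> set (m # ms) \<longrightarrow> (c,x) \<in> signed \<sigma>"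
    using srv_recv by (metis list.set_intros(2))
  with srv_recv show ?case 
    by (cases p; cases m; auto simp: Let_def)
next
  case (byz_send \<sigma> b m x)
  then show ?case by auto
qed

lemma inv_S2:
  fixes \<sigma> :: "('s::finite,'t) gstate"
  assumes "reach f B \<sigma>"
  shows "\<forall>c x. (c,x) \<in> signed \<sigma> \<longrightarrow> phase \<sigma> c = Done \<and> x = client_ts f (acks \<sigma> c)
           \<and> card (UNIV :: 's set) - f \<le> card {q. acks \<sigma> c q \<noteq> None}"
  using assms
proof (induction rule: reach.induct)
  case init
  then show ?case by (simp add: init_state_def)
next
  case (cli_propose \<sigma> c)
  then show ?case by auto
next
  case (cli_recv \<sigma> s c m ms)
  then show ?case by (cases m; auto)
next
  case (cli_confirm \<sigma> c)
  then show ?case by auto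
next
  case (srv_recv \<sigma> s p m ms)
  then show ?case by simp
next
  case (byz_send \<sigma> b m x)
  then show ?case by auto
qed

lemma inv_S3:
  fixes \<sigma> :: "('s::finite,'t) gstate"
  assumes "reach f B \<sigma>"
  shows "\<forall>s c x. s \<notin> B \<longrightarrow> c \<in> confirmed \<sigma> s x \<longrightarrow> (c,x) \<in> signed \<sigma>"
  using assms
proof (induction rule: reach.induct)
  case init
  then show ?case by (simp add: init_state_def)
next
  case (cli_propose \<sigma> c)
  then show ?case by auto
next
  case (cli_recv \<sigma> s c m ms)
  then show ?case by auto
next
  case (cli_confirm \<sigma> c)
  then show ?case by auto
next
  case (srv_recv \<sigma> s p m ms)
  have "Confirm T t \<in> set (chan \<sigma> p (Srv s)) \<Longrightarrow> (T,t) \<in> signed \<sigma>" for T t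
    using inv_S1[OF srv_recv.hyps(1)] by blast
  with srv_recv show ?case by (cases p; cases m; auto simp: Let_def)
next
  case (byz_send \<sigma> b m x)
  then show ?case by auto
qed

lemma inv_A1:
  fixes \<sigma> :: "('s::finite,'t) gstate"
  assumes "reach f B \<sigma>"
  shows "\<forall>q r T k. q \<notin> B \<longrightarrow> (ProposeAck T k \<in> set (chan \<sigma> (Srv q) r) \<or> Proposed T k \<in> set (chan \<sigma> (Srv q) r))
             \<longrightarrow> (T,k) \<in> proposed \<sigma> q q"
  using assms
proof (induction rule: reach.induct)
  case init
  then show ?case by (simp add: init_state_def)
next
  case (cli_propose \<sigma> c)
  then show ?case by auto
next
  case (cli_recv \<sigma> s c m ms)
  then show ?case by auto (metis list.set_intros(2))+
next
  case (cli_confirm \<sigma> c)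
  then show ?case by auto
next
  case (srv_recv \<sigma> s p m ms)
  have "\<forall>q T k. p = Srv q \<longrightarrow> q \<notin> B \<longrightarrow> (ProposeAck T k \<in> set (m # ms) \<or> Proposed T k \<in> set (m # ms)) \<longrightarrow> (T,k) \<in> proposed \<sigma> q q"
    using srv_recv by (metis list.set_intros(2))
  with srv_recv show ?case by (cases p; cases m; auto simp: Let_def)
next
  case (byz_send \<sigma> b m x)
  then show ?case by auto
qed



lemma handle_proposed_new:
  "(c,k) \<in> proposed (handle f s p m \<sigma>) a b \<Longrightarrow> (c,k) \<in> proposed \<sigma> a b \<or>
     (a = s \<and> ((\<exists>cl. p = Cli cl \<and> m = Propose c \<and> b = s \<and> k = clock \<sigma> s) \<or> (p = Srv b \<and> m = Proposed c k)))"
  by (cases p; cases m; auto simp: Let_def split: if_splits)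

lemma handle_clock:
  "clock (handle f s p m \<sigma>) a = (if a = s then (case m of Confirm T t \<Rightarrow> max (clock \<sigma> s) t | _ \<Rightarrow> clock \<sigma> s) else clock \<sigma> a)"
  by (cases p; cases m; auto simp: Let_def)

definition hextra :: "'s \<Rightarrow> ('s,'t) party \<Rightarrow> 't msg \<Rightarrow> ('s,'t) gstate \<Rightarrow> ('s,'t) party \<Rightarrow> ('s,'t) party \<Rightarrow> 't msg \<Rightarrow> bool" where
  "hextra s p m \<sigma> a b x = (a = Srv s \<and> ((\<exists>cl T. p = Cli cl \<and> m = Propose T \<and> ((is_srv b \<and> x = Proposed T (clock \<sigma> s)) \<or> (b = Cli cl \<and> x = ProposeAck T (clock \<sigma> s))))
        \<or> (\<exists>T t. m = Confirm T t \<and> (T,t) \<notin> fwd \<sigma> s \<and> is_srv b \<and> x = Confirm T t)))"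

lemma handle_chan:
  "\<exists>e. chan (handle f s p m \<sigma>) a b = chan \<sigma> a b @ e \<and> length e \<le> 1 \<and> (\<forall>x\<in>set e. hextra s p m \<sigma> a b x)"
  by (cases p; cases m; auto simp: Let_def hextra_def send_def is_srv_def)

lemma handle_chan_set:
  "x \<in> set (chan (handle f s p m \<sigma>) a b) \<Longrightarrow> x \<in> set (chan \<sigma> a b) \<or> hextra s p m \<sigma> a b x"
  using handle_chan[of f s p m \<sigma> a b] by auto


lemma handle_chan_mono: "x \<in> set (chan \<sigma> a b) \<Longrightarrow> x \<in> set (chan (handle f s p m \<sigma>) a b)"
  using handle_chan[of f s p m \<sigma> a b] by auto

lemma pop_set: "x \<in> set (pop ch p q a b) \<Longrightarrow> x \<in> set (ch a b)"
  by (auto split: if_splits dest: set_tl_sub)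

lemma handle_Proposed_in:
  "p = Srv q \<Longrightarrow> m = Proposed c k \<Longrightarrow> (c,k) \<in> proposed (handle f s p m \<sigma>) s q"
  by simp

lemma inv_A2:
  fixes \<sigma> :: "('s::finite,'t) gstate"
  assumes "reach f B \<sigma>"
  shows "\<forall>c q k. q \<notin> B \<longrightarrow> acks \<sigma> c q = Some k \<longrightarrow> (c,k) \<in> proposed \<sigma> q q"
  using assms
proof (induction rule: reach.induct)
  case init
  then show ?case by (simp add: init_state_def)
next
  case (cli_propose \<sigma> c)
  then show ?case by auto
next
  case (cli_recv \<sigma> s c m ms)
  have "s \<notin> B \<longrightarrow> (\<forall>T k. m = ProposeAck T k \<longrightarrow> (T,k) \<in> proposed \<sigma> s s)"
    using inv_A1[OF cli_recv.hyps(1)] cli_recv.hyps(2) by (metis list.set_intros(1))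
  with cli_recv show ?case by (cases m; auto)
next
  case (cli_confirm \<sigma> c)
  then show ?case by auto
next
  case (srv_recv \<sigma> s p m ms)
  show ?case
  proof (intro allI impI)
    fix c q k assume q: "q \<notin> B" and h: "acks (handle f s p m (\<sigma>\<lparr>chan := pop (chan \<sigma>) p (Srv s)\<rparr>)) c q = Some k"
    then have "(c,k) \<in> proposed \<sigma> q q" using srv_recv.IH by simp
    then show "(c,k) \<in> proposed (handle f s p m (\<sigma>\<lparr>chan := pop (chan \<sigma>) p (Srv s)\<rparr>)) q q"
      using handle_proposed_mono[of "\<sigma>\<lparr>chan := pop (chan \<sigma>) p (Srv s)\<rparr>" q q f s p m] by auto
  qed
next
  case (byz_send \<sigma> b m x)
  then show ?case by auto
qed

lemma inv_C1:
  fixes \<sigma> :: "('s::finite,'t) gstate"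
  assumes "reach f B \<sigma>"
  shows "\<forall>q c k. q \<notin> B \<longrightarrow> (c,k) \<in> proposed \<sigma> q q \<longrightarrow> k \<le> clock \<sigma> q"
  using assms
proof (induction rule: reach.induct)
  case init
  then show ?case by (simp add: init_state_def)
next
  case (cli_propose \<sigma> c)
  then show ?case by auto
next
  case (cli_recv \<sigma> s c m ms)
  then show ?case by auto
next
  case (cli_confirm \<sigma> c)
  then show ?case by auto
next
  case (srv_recv \<sigma> s p m ms)
  have A: "p = Srv s \<Longrightarrow> m = Proposed T k \<Longrightarrow> (T,k) \<in> proposed \<sigma> s s" for T k
    using inv_A1[OF srv_recv.hyps(1)] srv_recv.hyps(2,3) by (metis list.set_intros(1))
  show ?case
  proof (intro allI impI)
    fix q c k assume q: "q \<notin> B" and h: "(c,k) \<in> proposed (handle f s p m (\<sigma>\<lparr>chan := pop (chan \<sigma>) p (Srv s)\<rparr>)) q q"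
    from handle_proposed_new[OF h] have "(c,k) \<in> proposed \<sigma> q q \<or> (q = s \<and> ((\<exists>cl. p = Cli cl \<and> m = Propose c \<and> k = clock \<sigma> s) \<or> (p = Srv q \<and> m = Proposed c k)))"
      by auto
    then have "k \<le> clock \<sigma> q" using srv_recv.IH q A by auto
    then show "k \<le> clock (handle f s p m (\<sigma>\<lparr>chan := pop (chan \<sigma>) p (Srv s)\<rparr>)) q"
      using handle_clock_mono[of "\<sigma>\<lparr>chan := pop (chan \<sigma>) p (Srv s)\<rparr>" q f s p m] by simp
  qed
next
  case (byz_send \<sigma> b m x)
  then show ?case by auto
qed

lemma inv_C2:
  fixes \<sigma> :: "('s::finite,'t) gstate"
  assumes "reach f B \<sigma>"
  shows "\<forall>q r c x. q \<notin> B \<longrightarrow> Confirm c x \<in> set (chan \<sigma> (Srv q) r) \<longrightarrow> x \<le> clock \<sigma> q"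
  using assms
proof (induction rule: reach.induct)
  case init
  then show ?case by (simp add: init_state_def)
next
  case (cli_propose \<sigma> c)
  then show ?case by auto
next
  case (cli_recv \<sigma> s c m ms)
  then show ?case by auto (metis list.set_intros(2))
next
  case (cli_confirm \<sigma> c)
  then show ?case by auto
next
  case (srv_recv \<sigma> s p m ms)
  show ?case
  proof (intro allI impI)
    fix q r c x assume q: "q \<notin> B" and h: "Confirm c x \<in> set (chan (handle f s p m (\<sigma>\<lparr>chan := pop (chan \<sigma>) p (Srv s)\<rparr>)) (Srv q) r)"
    from handle_chan_set[OF h] have "Confirm c x \<in> set (chan \<sigma> (Srv q) r) \<or> (q = s \<and> m = Confirm c x)"
      by (auto simp: hextra_def split: if_splits dest: set_tl_sub)
    then show "x \<le> clock (handle f s p m (\<sigma>\<lparr>chan := pop (chan \<sigma>) p (Srv s)\<rparr>)) q"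
    proof
      assume "Confirm c x \<in> set (chan \<sigma> (Srv q) r)"
      then have "x \<le> clock \<sigma> q" using srv_recv.IH q by blast
      then show ?thesis using handle_clock_mono[of "\<sigma>\<lparr>chan := pop (chan \<sigma>) p (Srv s)\<rparr>" q f s p m] by simp
    next
      assume "q = s \<and> m = Confirm c x"
      then show ?thesis by (simp del: handle.simps add: handle_clock)
    qed
  qed
next
  case (byz_send \<sigma> b m x)
  then show ?case by auto
qed

lemma inv_F1:
  fixes \<sigma> :: "('s::finite,'t) gstate"
  assumes "reach f B \<sigma>"
  shows "\<forall>q s c k. q \<notin> B \<longrightarrow> s \<notin> B \<longrightarrow> (c,k) \<in> proposed \<sigma> q q \<longrightarrow>
           (c,k) \<in> proposed \<sigma> s q \<or> Proposed c k \<in> set (chan \<sigma> (Srv q) (Srv s))"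
  using assms
proof (induction rule: reach.induct)
  case init
  then show ?case by (simp add: init_state_def)
next
  case (cli_propose \<sigma> c)
  then show ?case by auto
next
  case (cli_recv \<sigma> s c m ms)
  then show ?case by auto
next
  case (cli_confirm \<sigma> c)
  then show ?case by auto
next
  case (srv_recv \<sigma> s0 p m ms)
  have A: "p = Srv s0 \<Longrightarrow> m = Proposed T k \<Longrightarrow> (T,k) \<in> proposed \<sigma> s0 s0" for T k
    using inv_A1[OF srv_recv.hyps(1)] srv_recv.hyps(2,3) by (metis list.set_intros(1))
  define \<sigma>1 where "\<sigma>1 = \<sigma>\<lparr>chan := pop (chan \<sigma>) p (Srv s0)\<rparr>"
  define \<sigma>' where "\<sigma>' = handle f s0 p m \<sigma>1"
  have pm: "proposed \<sigma> a b \<subseteq> proposed \<sigma>' a b" for a b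
    using handle_proposed_mono[of \<sigma>1 a b f s0 p m] by (simp add: \<sigma>1_def \<sigma>'_def)
  show ?case unfolding \<sigma>1_def[symmetric] \<sigma>'_def[symmetric]
  proof (intro allI impI)
    fix q s c k assume q: "q \<notin> B" and s: "s \<notin> B" and h: "(c,k) \<in> proposed \<sigma>' q q"
    from handle_proposed_new[OF h[unfolded \<sigma>'_def]] have
      "(c,k) \<in> proposed \<sigma> q q \<or> (q = s0 \<and> (\<exists>cl. p = Cli cl \<and> m = Propose c \<and> k = clock \<sigma> s0))"
      using A by (auto simp: \<sigma>1_def)
    then show "(c,k) \<in> proposed \<sigma>' s q \<or> Proposed c k \<in> set (chan \<sigma>' (Srv q) (Srv s))"
    proof
      assume "q = s0 \<and> (\<exists>cl. p = Cli cl \<and> m = Propose c \<and> k = clock \<sigma> s0)"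
      then show ?thesis by (auto simp: \<sigma>'_def \<sigma>1_def is_srv_def)
    next
      assume old: "(c,k) \<in> proposed \<sigma> q q"
      with srv_recv.IH q s have "(c,k) \<in> proposed \<sigma> s q \<or> Proposed c k \<in> set (chan \<sigma> (Srv q) (Srv s))"
        by blast
      then show ?thesis
      proof
        assume "(c,k) \<in> proposed \<sigma> s q" then show ?thesis using pm by blast
      next
        assume inch: "Proposed c k \<in> set (chan \<sigma> (Srv q) (Srv s))"
        show ?thesis
        proof (cases "p = Srv q \<and> s = s0 \<and> m = Proposed c k")
          case True
          then show ?thesis using handle_Proposed_in[of p q m c k f s0 \<sigma>1] by (auto simp: \<sigma>'_def)
        next
          case False
          then have "Proposed c k \<in> set (chan \<sigma>1 (Srv q) (Srv s))"
            using inch srv_recv.hyps(3) by (auto simp: \<sigma>1_def)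
          then show ?thesis using handle_chan_mono[of _ \<sigma>1] by (auto simp: \<sigma>'_def)
        qed
      qed
    qed
  qed
next
  case (byz_send \<sigma> b m x)
  then show ?case by auto
qed


lemma L1: "xs @ a # ys = zs @ e \<Longrightarrow> length e \<le> 1 \<Longrightarrow> (e = [a] \<and> xs = zs \<and> ys = []) \<or> (\<exists>ys'. zs = xs @ a # ys')"
  apply (cases e rule: rev_cases)
   apply auto[1]
  apply (cases ys rule: rev_cases) 
  apply auto
  done

lemma handle_Confirm_proposed: "m = Confirm T t \<Longrightarrow> proposed (handle f s p m \<sigma>) = proposed \<sigma>"
  by (simp add: Let_def)

lemma inv_F2:
  fixes \<sigma> :: "('s::finite,'t) gstate"
  assumes "reach f B \<sigma>"
  shows "\<forall>q s xs c x ys. q \<notin> B \<longrightarrow> s \<notin> B \<longrightarrow> chan \<sigma> (Srv q) (Srv s) = xs @ Confirm c x # ys \<longrightarrow>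
           (\<forall>c' k. (c',k) \<in> proposed \<sigma> q q \<longrightarrow> k < x \<longrightarrow> (c',k) \<in> proposed \<sigma> s q \<or> Proposed c' k \<in> set xs)"
  using assms
proof (induction rule: reach.induct)
  case init
  then show ?case by (simp add: init_state_def)
next
  case (cli_propose \<sigma> c)
  then show ?case by auto
next
  case (cli_recv \<sigma> s c m ms)
  then show ?case by auto
next
  case (cli_confirm \<sigma> c)
  then show ?case by auto
next
  case (srv_recv \<sigma> s0 p m ms)
  have A: "p = Srv s0 \<Longrightarrow> m = Proposed T k \<Longrightarrow> (T,k) \<in> proposed \<sigma> s0 s0" for T k
    using inv_A1[OF srv_recv.hyps(1)] srv_recv.hyps(2,3) by (metis list.set_intros(1))
  define \<sigma>1 where "\<sigma>1 = \<sigma>\<lparr>chan := pop (chan \<sigma>) p (Srv s0)\<rparr>"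
  define \<sigma>' where "\<sigma>' = handle f s0 p m \<sigma>1"
  have pm: "proposed \<sigma> a b \<subseteq> proposed \<sigma>' a b" for a b
    using handle_proposed_mono[of \<sigma>1 a b f s0 p m] by (simp add: \<sigma>1_def \<sigma>'_def)
  show ?case unfolding \<sigma>1_def[symmetric] \<sigma>'_def[symmetric]
  proof (intro allI impI)
    fix q s xs c x ys c' k
    assume q: "q \<notin> B" and s: "s \<notin> B" and eq: "chan \<sigma>' (Srv q) (Srv s) = xs @ Confirm c x # ys"
      and h: "(c',k) \<in> proposed \<sigma>' q q" and lt: "k < x"
    obtain e where e: "chan \<sigma>' (Srv q) (Srv s) = chan \<sigma>1 (Srv q) (Srv s) @ e" "length e \<le> 1"
       "\<forall>y\<in>set e. hextra s0 p m \<sigma>1 (Srv q) (Srv s) y"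
      using handle_chan[of f s0 p m \<sigma>1 "Srv q" "Srv s"] unfolding \<sigma>'_def by blast
    from L1[OF eq[unfolded e(1), symmetric] e(2)]
    have "(e = [Confirm c x] \<and> xs = chan \<sigma>1 (Srv q) (Srv s)) \<or> (\<exists>ys'. chan \<sigma>1 (Srv q) (Srv s) = xs @ Confirm c x # ys')"
      by blast
    then show "(c',k) \<in> proposed \<sigma>' s q \<or> Proposed c' k \<in> set xs"
    proof
      assume a: "e = [Confirm c x] \<and> xs = chan \<sigma>1 (Srv q) (Srv s)"
      then have hx: "hextra s0 p m \<sigma>1 (Srv q) (Srv s) (Confirm c x)" using e(3) by auto
      then have qs0: "q = s0" and mC: "m = Confirm c x" by (auto simp: hextra_def)
      have "proposed \<sigma>' = proposed \<sigma>" by (simp add: \<sigma>'_def \<sigma>1_def mC Let_def)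
      then have old: "(c',k) \<in> proposed \<sigma> q q" using h by simp
      with inv_F1[OF srv_recv.hyps(1)] q s
      have "(c',k) \<in> proposed \<sigma> s q \<or> Proposed c' k \<in> set (chan \<sigma> (Srv q) (Srv s))" by blast
      then show ?thesis
      proof
        assume "(c',k) \<in> proposed \<sigma> s q" then show ?thesis using pm by blast
      next
        assume inch: "Proposed c' k \<in> set (chan \<sigma> (Srv q) (Srv s))"
        have "Proposed c' k \<in> set (chan \<sigma>1 (Srv q) (Srv s))"
          using inch srv_recv.hyps(3) mC by (auto simp: \<sigma>1_def)
        then show ?thesis using a by simp
      qed
    next
      assume "\<exists>ys'. chan \<sigma>1 (Srv q) (Srv s) = xs @ Confirm c x # ys'"
      then obtain ys' where ys': "chan \<sigma>1 (Srv q) (Srv s) = xs @ Confirm c x # ys'" by blast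
      have cases: "(p = Srv q \<and> s = s0 \<and> chan \<sigma> (Srv q) (Srv s) = (m # xs) @ Confirm c x # ys') \<or>
            chan \<sigma> (Srv q) (Srv s) = xs @ Confirm c x # ys'"
        using ys' srv_recv.hyps(3) by (auto simp: \<sigma>1_def split: if_splits)
      then have cin: "Confirm c x \<in> set (chan \<sigma> (Srv q) (Srv s))" by auto
      from handle_proposed_new[OF h[unfolded \<sigma>'_def]] have
        "(c',k) \<in> proposed \<sigma> q q \<or> (q = s0 \<and> (\<exists>cl. p = Cli cl \<and> m = Propose c' \<and> k = clock \<sigma> s0))"
        using A by (auto simp: \<sigma>1_def)
      moreover have "\<not> (q = s0 \<and> (\<exists>cl. p = Cli cl \<and> m = Propose c' \<and> k = clock \<sigma> s0))"
      proof
        assume "q = s0 \<and> (\<exists>cl. p = Cli cl \<and> m = Propose c' \<and> k = clock \<sigma> s0)"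
        then have "k = clock \<sigma> q" by auto
        moreover have "x \<le> clock \<sigma> q" using inv_C2[OF srv_recv.hyps(1)] q cin by blast
        ultimately show False using lt by simp
      qed
      ultimately have old: "(c',k) \<in> proposed \<sigma> q q" by blast
      from cases show ?thesis
      proof
        assume a: "p = Srv q \<and> s = s0 \<and> chan \<sigma> (Srv q) (Srv s) = (m # xs) @ Confirm c x # ys'"
        then have "(c',k) \<in> proposed \<sigma> s q \<or> Proposed c' k \<in> set (m # xs)"
          using srv_recv.IH q s old lt by blast
        then show ?thesis
        proof (elim disjE)
          assume "(c',k) \<in> proposed \<sigma> s q" then show ?thesis using pm by blast
        next
          assume "Proposed c' k \<in> set (m # xs)"
          then have "m = Proposed c' k \<or> Proposed c' k \<in> set xs" by auto
          then show ?thesis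
          proof
            assume "m = Proposed c' k"
            then show ?thesis using handle_Proposed_in[of p q m c' k f s0 \<sigma>1] a by (auto simp: \<sigma>'_def)
          qed simp
        qed
      next
        assume "chan \<sigma> (Srv q) (Srv s) = xs @ Confirm c x # ys'"
        then have "(c',k) \<in> proposed \<sigma> s q \<or> Proposed c' k \<in> set xs"
          using srv_recv.IH q s old lt by blast
        then show ?thesis using pm by blast
      qed
    qed
  qed
next
  case (byz_send \<sigma> b m x)
  then show ?case by auto
qed


lemma handle_cwit:
  "q \<in> cwit (handle f s0 p m \<sigma>) s c \<Longrightarrow> q \<in> cwit \<sigma> s c \<or> (s = s0 \<and> p = Srv q \<and> (\<exists>t. m = Confirm c t))"
  by (cases p; cases m; auto simp: Let_def split: if_splits)

lemma handle_pending:
  "pending (handle f s0 p m \<sigma>) s t = pending \<sigma> s t \<or>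
   (s = s0 \<and> (\<exists>T. m = Confirm T t \<and> card (cwit (handle f s0 p m \<sigma>) s T) = CARD('s) - f \<and>
      pending (handle f s0 p m \<sigma>) s t = {T'. \<exists>q\<in>cwit (handle f s0 p m \<sigma>) s T. \<exists>k\<le>t. (T',k) \<in> proposed \<sigma> s q}))"
  for \<sigma> :: "('s::finite,'t) gstate"
  by (cases p; cases m; auto simp: Let_def)

lemma inv_W1:
  fixes \<sigma> :: "('s::finite,'t) gstate"
  assumes "reach f B \<sigma>"
  shows "\<forall>q s c. q \<notin> B \<longrightarrow> s \<notin> B \<longrightarrow> q \<in> cwit \<sigma> s c \<longrightarrow>
     (\<exists>x. (c,x) \<in> signed \<sigma> \<and> x \<le> clock \<sigma> q \<and> (\<forall>c' k. (c',k) \<in> proposed \<sigma> q q \<longrightarrow> k < x \<longrightarrow> (c',k) \<in> proposed \<sigma> s q))"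
  using assms
proof (induction rule: reach.induct)
  case init
  then show ?case by (simp add: init_state_def)
next
  case (cli_propose \<sigma> c)
  then show ?case by auto
next
  case (cli_recv \<sigma> s c m ms)
  then show ?case by auto
next
  case (cli_confirm \<sigma> c)
  then show ?case by simp blast
next
  case (srv_recv \<sigma> s0 p m ms)
  have A: "p = Srv s0 \<Longrightarrow> m = Proposed T k \<Longrightarrow> (T,k) \<in> proposed \<sigma> s0 s0" for T k
    using inv_A1[OF srv_recv.hyps(1)] srv_recv.hyps(2,3) by (metis list.set_intros(1))
  define \<sigma>1 where "\<sigma>1 = \<sigma>\<lparr>chan := pop (chan \<sigma>) p (Srv s0)\<rparr>"
  define \<sigma>' where "\<sigma>' = handle f s0 p m \<sigma>1"
  have pm: "proposed \<sigma> a b \<subseteq> proposed \<sigma>' a b" for a b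
    using handle_proposed_mono[of \<sigma>1 a b f s0 p m] by (simp add: \<sigma>1_def \<sigma>'_def)
  have cm: "clock \<sigma> a \<le> clock \<sigma>' a" for a
    using handle_clock_mono[of \<sigma>1 a f s0 p m] by (simp add: \<sigma>1_def \<sigma>'_def)
  have sg: "signed \<sigma>' = signed \<sigma>" by (simp add: \<sigma>'_def \<sigma>1_def)
  show ?case unfolding \<sigma>1_def[symmetric] \<sigma>'_def[symmetric]
  proof (intro allI impI)
    fix q s c assume q: "q \<notin> B" and s: "s \<notin> B" and w: "q \<in> cwit \<sigma>' s c"
    have pn: "(c',k) \<in> proposed \<sigma> q q \<or> (q = s0 \<and> (\<exists>cl. p = Cli cl \<and> m = Propose c' \<and> k = clock \<sigma> s0))"
      if "(c',k) \<in> proposed \<sigma>' q q" for c' k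
      using handle_proposed_new[OF that[unfolded \<sigma>'_def]] A by (auto simp: \<sigma>1_def)
    from handle_cwit[OF w[unfolded \<sigma>'_def]]
    have "q \<in> cwit \<sigma> s c \<or> (s = s0 \<and> p = Srv q \<and> (\<exists>t. m = Confirm c t))" by (simp add: \<sigma>1_def)
    then show "\<exists>x. (c,x) \<in> signed \<sigma>' \<and> x \<le> clock \<sigma>' q \<and> (\<forall>c' k. (c',k) \<in> proposed \<sigma>' q q \<longrightarrow> k < x \<longrightarrow> (c',k) \<in> proposed \<sigma>' s q)"
    proof
      assume "q \<in> cwit \<sigma> s c"
      then obtain x where x: "(c,x) \<in> signed \<sigma>" "x \<le> clock \<sigma> q"
        "\<forall>c' k. (c',k) \<in> proposed \<sigma> q q \<longrightarrow> k < x \<longrightarrow> (c',k) \<in> proposed \<sigma> s q"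
        using srv_recv.IH q s by blast
      show ?thesis
      proof (intro exI conjI allI impI)
        show "(c,x) \<in> signed \<sigma>'" using x sg by simp
        show "x \<le> clock \<sigma>' q" using x cm order_trans by blast
        fix c' k assume h: "(c',k) \<in> proposed \<sigma>' q q" and lt: "k < x"
        from pn[OF h] have "(c',k) \<in> proposed \<sigma> q q" using lt x(2) by auto
        then show "(c',k) \<in> proposed \<sigma>' s q" using x(3) lt pm by blast
      qed
    next
      assume a: "s = s0 \<and> p = Srv q \<and> (\<exists>t. m = Confirm c t)"
      then obtain t where t: "m = Confirm c t" by blast
      have ch: "chan \<sigma> (Srv q) (Srv s) = Confirm c t # ms" using srv_recv.hyps(3) a t by simp
      show ?thesis
      proof (intro exI conjI allI impI)
        show "(c,t) \<in> signed \<sigma>'" using inv_S1[OF srv_recv.hyps(1)] ch sg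
          by (metis list.set_intros(1))
        have "t \<le> clock \<sigma> q" using inv_C2[OF srv_recv.hyps(1)] ch q by (metis list.set_intros(1))
        then show "t \<le> clock \<sigma>' q" using cm order_trans by blast
        fix c' k assume h: "(c',k) \<in> proposed \<sigma>' q q" and lt: "k < t"
        from pn[OF h] a have "(c',k) \<in> proposed \<sigma> q q" by auto
        then have "(c',k) \<in> proposed \<sigma> s q \<or> Proposed c' k \<in> set []"
          using inv_F2[OF srv_recv.hyps(1)] q s ch lt by (metis append_Nil)
        then show "(c',k) \<in> proposed \<sigma>' s q" using pm by auto
      qed
    qed
  qed
next
  case (byz_send \<sigma> b m x)
  then show ?case by auto
qed

lemma inv_P1:
  fixes \<sigma> :: "('s::finite,'t) gstate"
  assumes "reach f B \<sigma>"
  shows "\<forall>s t. s \<notin> B \<longrightarrow> pending \<sigma> s t \<noteq> {} \<longrightarrow> (\<exists>W. card W = CARD('s) - f \<and>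
     (\<forall>q\<in>W. q \<notin> B \<longrightarrow> t \<le> clock \<sigma> q \<and> (\<forall>c' k. (c',k) \<in> proposed \<sigma> q q \<longrightarrow> k < t \<longrightarrow> c' \<in> pending \<sigma> s t)))"
  using assms
proof (induction rule: reach.induct)
  case init
  then show ?case by (simp add: init_state_def)
next
  case (cli_propose \<sigma> c)
  then show ?case by auto
next
  case (cli_recv \<sigma> s c m ms)
  then show ?case by auto
next
  case (cli_confirm \<sigma> c)
  then show ?case by auto
next
  case (srv_recv \<sigma> s0 p m ms)
  have A: "p = Srv s0 \<Longrightarrow> m = Proposed T k \<Longrightarrow> (T,k) \<in> proposed \<sigma> s0 s0" for T k
    using inv_A1[OF srv_recv.hyps(1)] srv_recv.hyps(2,3) by (metis list.set_intros(1))
  define \<sigma>1 where "\<sigma>1 = \<sigma>\<lparr>chan := pop (chan \<sigma>) p (Srv s0)\<rparr>"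
  define \<sigma>' where "\<sigma>' = handle f s0 p m \<sigma>1"
  have r': "reach f B \<sigma>'" unfolding \<sigma>'_def \<sigma>1_def by (rule reach.srv_recv[OF srv_recv.hyps])
  have cm: "clock \<sigma> a \<le> clock \<sigma>' a" for a
    using handle_clock_mono[of \<sigma>1 a f s0 p m] by (simp add: \<sigma>1_def \<sigma>'_def)
  have sg: "signed \<sigma>' = signed \<sigma>" by (simp add: \<sigma>'_def \<sigma>1_def)
  show ?case unfolding \<sigma>1_def[symmetric] \<sigma>'_def[symmetric]
  proof (intro allI impI)
    fix s t assume s: "s \<notin> B" and ne: "pending \<sigma>' s t \<noteq> {}"
    have pn: "(c',k) \<in> proposed \<sigma> q q \<or> (q = s0 \<and> (\<exists>cl. p = Cli cl \<and> m = Propose c' \<and> k = clock \<sigma> s0))"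
      if "(c',k) \<in> proposed \<sigma>' q q" for c' k q
      using handle_proposed_new[OF that[unfolded \<sigma>'_def]] A by (auto simp: \<sigma>1_def)
    from handle_pending[of f s0 p m \<sigma>1 s t]
    have "pending \<sigma>' s t = pending \<sigma> s t \<or>
      (s = s0 \<and> (\<exists>T. m = Confirm T t \<and> card (cwit \<sigma>' s T) = CARD('s) - f \<and>
      pending \<sigma>' s t = {T'. \<exists>q\<in>cwit \<sigma>' s T. \<exists>k\<le>t. (T',k) \<in> proposed \<sigma> s q}))"
      by (simp add: \<sigma>'_def \<sigma>1_def del: handle.simps)
    then show "\<exists>W. card W = CARD('s) - f \<and>
     (\<forall>q\<in>W. q \<notin> B \<longrightarrow> t \<le> clock \<sigma>' q \<and> (\<forall>c' k. (c',k) \<in> proposed \<sigma>' q q \<longrightarrow> k < t \<longrightarrow> c' \<in> pending \<sigma>' s t))"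
    proof
      assume eqp: "pending \<sigma>' s t = pending \<sigma> s t"
      then obtain W where W: "card W = CARD('s) - f"
        "\<forall>q\<in>W. q \<notin> B \<longrightarrow> t \<le> clock \<sigma> q \<and> (\<forall>c' k. (c',k) \<in> proposed \<sigma> q q \<longrightarrow> k < t \<longrightarrow> c' \<in> pending \<sigma> s t)"
        using srv_recv.IH[rule_format, OF s, of t] ne eqp by auto
      show ?thesis
      proof (intro exI conjI ballI impI allI)
        show "card W = CARD('s) - f" by fact
        fix q assume qW: "q \<in> W" and q: "q \<notin> B"
        show "t \<le> clock \<sigma>' q" using W qW q cm order_trans by blast
        fix c' k assume h: "(c',k) \<in> proposed \<sigma>' q q" and lt: "k < t"
        from pn[OF h] have "(c',k) \<in> proposed \<sigma> q q" using lt W qW q by auto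
        then show "c' \<in> pending \<sigma>' s t" using W qW q lt eqp by auto
      qed
    next
      assume "s = s0 \<and> (\<exists>T. m = Confirm T t \<and> card (cwit \<sigma>' s T) = CARD('s) - f \<and>
        pending \<sigma>' s t = {T'. \<exists>q\<in>cwit \<sigma>' s T. \<exists>k\<le>t. (T',k) \<in> proposed \<sigma> s q})"
      then obtain T where ss0: "s = s0" and mT: "m = Confirm T t" and cW: "card (cwit \<sigma>' s T) = CARD('s) - f"
        and pe: "pending \<sigma>' s t = {T'. \<exists>q\<in>cwit \<sigma>' s T. \<exists>k\<le>t. (T',k) \<in> proposed \<sigma> s q}" by blast
      have Tt: "(T,t) \<in> signed \<sigma>'" using inv_S1[OF srv_recv.hyps(1)] srv_recv.hyps(3) mT sg
        by (metis list.set_intros(1))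
      have prq: "proposed \<sigma>' = proposed \<sigma>" by (simp add: \<sigma>'_def \<sigma>1_def mT Let_def)
      show ?thesis
      proof (intro exI conjI ballI impI allI)
        show "card (cwit \<sigma>' s T) = CARD('s) - f" by fact
        fix q assume qW: "q \<in> cwit \<sigma>' s T" and q: "q \<notin> B"
        obtain x where x: "(T,x) \<in> signed \<sigma>'" "x \<le> clock \<sigma>' q"
          "\<forall>c' k. (c',k) \<in> proposed \<sigma>' q q \<longrightarrow> k < x \<longrightarrow> (c',k) \<in> proposed \<sigma>' s q"
          using inv_W1[OF r'] q s qW by blast
        have "x = t" using inv_S2[OF r'] x(1) Tt by metis
        then show "t \<le> clock \<sigma>' q" using x by simp
        fix c' k assume h: "(c',k) \<in> proposed \<sigma>' q q" and lt: "k < t"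
        then have "(c',k) \<in> proposed \<sigma> s q" using x(3) \<open>x = t\<close> prq by auto
        moreover have "k \<le> t" using lt by simp
        ultimately show "c' \<in> pending \<sigma>' s t" using pe qW by blast
      qed
    qed
  qed
next
  case (byz_send \<sigma> b m x)
  then show ?case by auto
qed

lemma kth_card:
  fixes v :: "'s::finite \<Rightarrow> int"
  assumes "f < CARD('s)"
  shows "card {q. kth_largest f v < v q} \<le> f"
proof -
  define M where "M = image_mset v (mset_set (UNIV::'s set))"
  define S where "S = sorted_list_of_multiset M"
  define L where "L = rev S"
  define K where "K = kth_largest f v"
  have K: "K = L ! f" by (simp add: K_def kth_largest_def L_def S_def M_def)
  have mL: "mset L = M" by (simp add: L_def S_def)
  have len: "length L = CARD('s)"
    using arg_cong[OF mL, of size] by (simp add: M_def)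
  have sS: "sorted S" by (simp add: S_def)
  have "card {q. K < v q} = size (filter_mset (\<lambda>y. K < y) M)"
    by (simp add: M_def filter_mset_image_mset filter_mset_mset_set)
  also have "\<dots> = size (mset (filter (\<lambda>y. K < y) L))"
    by (simp add: mL)
  also have "\<dots> = card {i. i < length L \<and> K < L ! i}"
    by (simp only: size_mset length_filter_conv_card)
  also have "\<dots> \<le> card {..<f}"
  proof (rule card_mono)
    show "{i. i < length L \<and> K < L ! i} \<subseteq> {..<f}"
    proof
      fix i assume i: "i \<in> {i. i < length L \<and> K < L ! i}"
      show "i \<in> {..<f}"
      proof (rule ccontr)
        assume "i \<notin> {..<f}"
        then have fi: "f \<le> i" by simp
        have il: "i < length S" using i by (simp add: L_def)
        have "L ! i = S ! (length S - Suc i)" using il by (simp add: L_def rev_nth)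
        also have "\<dots> \<le> S ! (length S - Suc f)"
          using sS il fi by (intro sorted_nth_mono) auto
        also have "\<dots> = L ! f" using il fi by (simp add: L_def rev_nth)
        finally show False using i K by simp
      qed
    qed
  qed simp
  finally show ?thesis by (simp add: K_def)
qed

theorem lemma4:
  fixes f :: nat and B :: "'s::finite set" and \<sigma> :: "('s, 't) gstate"
    and s s' :: 's and t :: int
  assumes "CARD('s) = 4 * f + 1"
    and "card B \<le> f"
    and "reach f B \<sigma>"
    and "s \<notin> B" and "s' \<notin> B"
    and "pending \<sigma> s t \<noteq> {}"
  shows "(\<Union>t'\<in>{t'. t' < t}. confirmed \<sigma> s' t') \<subseteq> pending \<sigma> s t"
proof
  fix T assume "T \<in> (\<Union>t'\<in>{t'. t' < t}. confirmed \<sigma> s' t')"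
  then obtain t' where tt: "t' < t" and Tc: "T \<in> confirmed \<sigma> s' t'" by blast
  have sgn: "(T,t') \<in> signed \<sigma>" using inv_S3[OF assms(3)] assms(5) Tc by blast
  define a where "a = acks \<sigma> T"
  define A where "A = {q. a q \<noteq> None}"
  define v where "v = (\<lambda>q. case a q of None \<Rightarrow> 0 | Some k \<Rightarrow> k)"
  define K where "K = kth_largest f v"
  define H where "H = {q. K < v q}"
  have t'K: "t' = 1 + K" and cA: "CARD('s) - f \<le> card A"
    using inv_S2[OF assms(3)] sgn by (auto simp: a_def A_def K_def v_def client_ts_def)
  obtain W where cW: "card W = CARD('s) - f" and
    W: "\<forall>q\<in>W. q \<notin> B \<longrightarrow> t \<le> clock \<sigma> q \<and> (\<forall>c' k. (c',k) \<in> proposed \<sigma> q q \<longrightarrow> k < t \<longrightarrow> c' \<in> pending \<sigma> s t)"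
    using inv_P1[OF assms(3)] assms(4,6) by blast
  have cH: "card H \<le> f" unfolding H_def K_def using kth_card[of f v] assms(1) by simp
  have "\<exists>q. q \<in> W \<inter> A \<and> q \<notin> B \<union> H"
  proof (rule ccontr)
    assume "\<not> ?thesis"
    then have sub: "W \<inter> A \<subseteq> B \<union> H" by blast
    have "card (W \<inter> A) \<le> card (B \<union> H)" using card_mono[OF _ sub] by simp
    also have "\<dots> \<le> card B + card H" by (rule card_Un_le)
    finally have c1: "card (W \<inter> A) \<le> 2 * f" using assms(2) cH by simp
    have "card (W \<union> A) + card (W \<inter> A) = card W + card A" using card_Un_Int[of W A] by simp
    moreover have "card (W \<union> A) \<le> CARD('s)" by (rule card_mono) simp_all
    ultimately show False using c1 cW cA assms(1) by linarith
  qed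
  then obtain q where qW: "q \<in> W" and qA: "q \<in> A" and qB: "q \<notin> B" and qH: "q \<notin> H" by blast
  obtain k where ak: "a q = Some k" using qA A_def by auto
  have "k \<le> K" using qH ak by (simp add: H_def v_def)
  then have kt: "k < t" using tt t'K by simp
  have "(T,k) \<in> proposed \<sigma> q q" using inv_A2[OF assms(3)] qB ak by (simp add: a_def)
  then show "T \<in> pending \<sigma> s t" using W qW qB kt by blast
qed

end
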